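(* For all positive integers $n,p$, $$\beta^*(n,p,\infty)=\Omega\left(n^{2/3}p^{2/3}+n+p\right).$$
   Context: A path system is a pair $S=(V,\Pi)$ where $V$ is a finite ground set of nodes and $\Pi$ is a multiset of finite sequences of nodes (paths), each containing each node at most once. Its size is $\|S\|=\sum_{\pi\in\Pi}|\pi|$ ($|\pi|$ = number of nodes). Write $x<_\pi y$ if $x,y\in\pi$ and $x$ strictly precedes $y$ in $\pi$. A $b$-bridge consists of $b$ distinct nodes $v_1,\dots,v_b$ and $b$ distinct paths $\pi_1,\dots,\pi_b$ with $v_i<_{\pi_i}v_{i+1}$ for $1\le i\le b-1$ and $v_1<_{\pi_b}v_b$; $\pi_b$ is the river and the others are arcs. An ordered path system is a path system with a total order on its paths; an ordered bridge is a bridge whose river comes after all of its arcs in this order. The ordered bridge girth is the least $b$ such that there is an ordered $b$-bridge ($\infty$ if none). $\beta^*(n,p,k)$ is the maximum possible size of an ordered path system with $n$ nodes, $p$ paths and ordered bridge girth $>k$. *)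

theory Defs
  imports Complex_Main "HOL-Library.Extended_Nat"
begin

text \<open>Nodes are natural numbers; an ordered path system is a ground set V together
with a list of paths (the list order is the total order on the paths; repetitions
model the multiset).\<close>

definition prec :: "nat list \<Rightarrow> nat \<Rightarrow> nat \<Rightarrow> bool" where
  "prec \<pi> x y \<longleftrightarrow> (\<exists>i j. i < j \<and> j < length \<pi> \<and> \<pi> ! i = x \<and> \<pi> ! j = y)"

definition path_system :: "nat set \<Rightarrow> nat list list \<Rightarrow> bool" where
  "path_system V Ps \<longleftrightarrow> finite V \<and> (\<forall>\<pi>\<in>set Ps. distinct \<pi> \<and> set \<pi> \<subseteq> V)"

definition ps_size :: "nat list list \<Rightarrow> nat" where
  "ps_size Ps = (\<Sum>\<pi>\<leftarrow>Ps. length \<pi>)"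

text \<open>An ordered b-bridge: nodes vs!0..vs!(b-1), path indices is!0..is!(b-1);
the river is Ps!(is!(b-1)) and it comes after all arcs in the order.\<close>
definition ordered_bridge :: "nat list list \<Rightarrow> nat \<Rightarrow> nat list \<Rightarrow> nat list \<Rightarrow> bool" where
  "ordered_bridge Ps b vs is \<longleftrightarrow>
     length vs = b \<and> length is = b \<and> b \<ge> 1 \<and> distinct vs \<and> distinct is \<and>
     (\<forall>i\<in>set is. i < length Ps) \<and>
     (\<forall>i. i + 1 < b \<longrightarrow> prec (Ps ! (is ! i)) (vs ! i) (vs ! (i + 1))) \<and>
     prec (Ps ! (is ! (b - 1))) (vs ! 0) (vs ! (b - 1)) \<and>
     (\<forall>i. i + 1 < b \<longrightarrow> is ! i < is ! (b - 1))"

definition obg_gt :: "nat list list \<Rightarrow> enat \<Rightarrow> bool" where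
  "obg_gt Ps k \<longleftrightarrow> (\<forall>b vs is. ordered_bridge Ps b vs is \<longrightarrow> k < enat b)"

definition beta_star :: "nat \<Rightarrow> nat \<Rightarrow> enat \<Rightarrow> nat" where
  "beta_star n p k = Max {ps_size Ps | V Ps. path_system V Ps \<and> card V = n \<and> length Ps = p \<and> obg_gt Ps k}"

end

theory Submission
  imports Defs "HOL-Library.Nat_Bijection"
begin

lemma prec_mem: "prec \<pi> x y \<Longrightarrow> x \<in> set \<pi> \<and> y \<in> set \<pi>"
  unfolding prec_def by auto

lemma prec_map_upt:
  assumes "prec (map g [1..<k+1]) u w"
  shows "\<exists>x1 x2. 1 \<le> x1 \<and> x1 < x2 \<and> x2 \<le> k \<and> u = g x1 \<and> w = g x2"
proof -
  from assms obtain i j where "i < j" "j < k" "u = g (1+i)" "w = g (1+j)"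
    unfolding prec_def by (auto simp del: upt_Suc)
  then show ?thesis by (intro exI[of _ "1+i"] exI[of _ "1+j"]) auto
qed

lemma prec_upt0: "prec [0..<n] u w \<Longrightarrow> u < w"
  unfolding prec_def by auto

lemma prec_single: "\<not> prec [a] u w"
  unfolding prec_def by auto

lemma prec_Nil: "\<not> prec [] u w"
  unfolding prec_def by auto

lemma no_bridge:
  fixes X Y :: "nat \<Rightarrow> int" and s :: "nat \<Rightarrow> int"
  assumes P: "\<And>j u w. j < length Ps \<Longrightarrow> prec (Ps!j) u w \<Longrightarrow> X u < X w \<and> Y w - Y u = s j * (X w - X u)"
  and mono: "\<And>j j'. j \<le> j' \<Longrightarrow> s j \<le> s j'"
  and Q: "\<And>j j' u v w. j < length Ps \<Longrightarrow> j' < length Ps \<Longrightarrow> j \<noteq> j' \<Longrightarrow> s j = s j'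
            \<Longrightarrow> prec (Ps!j) u v \<Longrightarrow> prec (Ps!j') u w \<Longrightarrow> False"
  shows "\<not> ordered_bridge Ps b vs is"
proof
  assume B: "ordered_bridge Ps b vs is"
  define r where "r = is ! (b - 1)"
  have lb: "length vs = b" "length is = b" "b \<ge> 1" "distinct is"
    and idx: "\<forall>i\<in>set is. i < length Ps"
    and arcs: "\<And>i. i + 1 < b \<Longrightarrow> prec (Ps ! (is ! i)) (vs ! i) (vs ! (i + 1))"
    and riv: "prec (Ps ! r) (vs ! 0) (vs ! (b - 1))"
    and ord: "\<And>i. i + 1 < b \<Longrightarrow> is ! i < r"
    using B unfolding ordered_bridge_def r_def by auto
  have rlt: "r < length Ps" proof -
    have "is!(b-1) \<in> set is" using lb by (intro nth_mem) auto
    thus ?thesis using idx unfolding r_def by auto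
  qed
  have Pr: "X (vs!0) < X (vs!(b-1)) \<and> Y (vs!(b-1)) - Y (vs!0) = s r * (X (vs!(b-1)) - X (vs!0))"
    using P[OF rlt riv] .
  show False
  proof (cases "b = 1")
    case True
    then show ?thesis using Pr by simp
  next
    case False
    hence b2: "b \<ge> 2" using lb by auto
    have ilt: "\<And>i. i < b \<Longrightarrow> is ! i < length Ps" using idx lb by auto
    have stepf: "\<And>i. i + 1 < b \<Longrightarrow> Y (vs!(i+1)) - Y (vs!i) \<le> s r * (X (vs!(i+1)) - X (vs!i))"
    proof -
      fix i assume i: "i + 1 < b"
      have h: "X (vs!i) < X (vs!(i+1)) \<and> Y (vs!(i+1)) - Y (vs!i) = s (is!i) * (X (vs!(i+1)) - X (vs!i))"
        using P[OF ilt arcs[OF i]] i by auto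
      have "s (is!i) \<le> s r" using mono ord[OF i] by auto
      thus "Y (vs!(i+1)) - Y (vs!i) \<le> s r * (X (vs!(i+1)) - X (vs!i))"
        using h by (simp add: mult_right_mono)
    qed
    have first: "Y (vs!1) - Y (vs!0) < s r * (X (vs!1) - X (vs!0))"
    proof -
      have i: "0 + 1 < b" using b2 by auto
      have h: "X (vs!0) < X (vs!1) \<and> Y (vs!1) - Y (vs!0) = s (is!0) * (X (vs!1) - X (vs!0))"
        using P[OF ilt arcs[OF i]] i by auto
      have le: "s (is!0) \<le> s r" using mono ord[OF i] by auto
      have ne: "s (is!0) \<noteq> s r"
      proof
        assume eq: "s (is!0) = s r"
        have "is ! 0 \<noteq> r" unfolding r_def using lb b2 by (simp add: nth_eq_iff_index_eq)
        moreover have "is ! 0 < length Ps" using ilt b2 by auto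
        ultimately show False using Q[OF _ rlt _ eq arcs[OF i] riv] by blast
      qed
      hence "s (is!0) < s r" using le by auto
      thus ?thesis using h by (simp add: mult_strict_right_mono)
    qed
    have ind: "\<And>t. 1 \<le> t \<Longrightarrow> t < b \<Longrightarrow> Y (vs!t) - Y (vs!0) < s r * (X (vs!t) - X (vs!0))"
    proof -
      fix t assume "1 \<le> t" "t < b"
      then show "Y (vs!t) - Y (vs!0) < s r * (X (vs!t) - X (vs!0))"
      proof (induction t rule: dec_induct)
        case base
        then show ?case using first by simp
      next
        case (step t)
        have "Y (vs!(t+1)) - Y (vs!t) \<le> s r * (X (vs!(t+1)) - X (vs!t))" using step.prems step(1)
          by (intro stepf) auto
        with step show ?case by (simp add: algebra_simps)
      qed
    qed
    have "Y (vs!(b-1)) - Y (vs!0) < s r * (X (vs!(b-1)) - X (vs!0))"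
      using ind[of "b-1"] b2 by auto
    then show False using Pr by simp
  qed
qed


lemma size_le: "\<forall>\<pi>\<in>set Ps. length \<pi> \<le> n \<Longrightarrow> ps_size Ps \<le> length Ps * n"
  by (induction Ps) (auto simp: ps_size_def)

lemma beta_ge:
  assumes "path_system V Ps" "card V = n" "length Ps = p" "obg_gt Ps \<infinity>"
  shows "ps_size Ps \<le> beta_star n p \<infinity>"
proof -
  let ?S = "{ps_size Ps | V Ps. path_system V Ps \<and> card V = n \<and> length Ps = p \<and> obg_gt Ps \<infinity>}"
  have "?S \<subseteq> {..p*n}"
  proof
    fix x assume "x \<in> ?S"
    then obtain V' Ps' where x: "x = ps_size Ps'" "path_system V' Ps'" "card V' = n" "length Ps' = p" by blast
    have "\<forall>\<pi>\<in>set Ps'. length \<pi> \<le> n"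
    proof
      fix \<pi> assume "\<pi> \<in> set Ps'"
      hence "distinct \<pi>" "set \<pi> \<subseteq> V'" "finite V'" using x(2) unfolding path_system_def by auto
      hence "length \<pi> = card (set \<pi>)" "card (set \<pi>) \<le> card V'" by (simp add: distinct_card, meson card_mono)
      thus "length \<pi> \<le> n" using x(3) by simp
    qed
    from size_le[OF this] show "x \<in> {..p*n}" using x by simp
  qed
  hence "finite ?S" by (rule finite_subset) simp
  moreover have "ps_size Ps \<in> ?S" using assms by blast
  ultimately show ?thesis unfolding beta_star_def by (rule Max_ge)
qed

lemma extend_set:
  fixes A :: "nat set"
  assumes "finite A" "card A \<le> n"
  shows "\<exists>V. finite V \<and> A \<subseteq> V \<and> card V = n"
proof -
  have "infinite (UNIV - A)" using assms(1) by (simp add: Diff_infinite_finite)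
  then obtain B where B: "finite B" "card B = n - card A" "B \<subseteq> UNIV - A"
    using infinite_arbitrarily_large by blast
  have "card (A \<union> B) = card A + card B" using B assms(1) by (intro card_Un_disjoint) auto
  thus ?thesis using B assms by (intro exI[of _ "A \<union> B"]) auto
qed

lemma constrA:
  assumes "n \<ge> 1" "p \<ge> 1"
  shows "n + p - 1 \<le> beta_star n p \<infinity>"
proof -
  define Ps where "Ps = [0..<n] # replicate (p-1) [0::nat]"
  have len: "length Ps = p" using assms unfolding Ps_def by simp
  have j0: "\<And>j u v. j < length Ps \<Longrightarrow> prec (Ps!j) u v \<Longrightarrow> j = 0"
  proof -
    fix j u v assume jl: "j < length Ps" and h: "prec (Ps!j) u v"
    show "j = 0"
    proof (cases j)
      case (Suc i)
      hence "i < p - 1" using jl len by simp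
      hence "Ps ! j = [0]" using Suc unfolding Ps_def by simp
      thus ?thesis using h prec_single by metis
    qed simp
  qed
  have nb: "\<And>b vs is. \<not> ordered_bridge Ps b vs is"
  proof (rule no_bridge[where X="\<lambda>u. int u" and Y="\<lambda>u. 0" and s="\<lambda>j. 0"])
    fix j u w assume "j < length Ps" "prec (Ps!j) u w"
    moreover have "j = 0" using j0 calculation by blast
    ultimately show "int u < int w \<and> 0 - 0 = 0 * (int w - int u)"
      using prec_upt0 unfolding Ps_def by auto
  next
    fix j j' u v w assume "j < length Ps" "j' < length Ps" "j \<noteq> j'" "prec (Ps!j) u v" "prec (Ps!j') u w"
    thus False using j0 by metis
  qed simp
  have ps: "path_system {0..<n} Ps" unfolding path_system_def Ps_def using assms by auto
  have "ps_size Ps = n + (p - 1)" unfolding Ps_def ps_size_def by (simp add: sum_list_replicate)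
  moreover have "ps_size Ps \<le> beta_star n p \<infinity>"
    using beta_ge[OF ps _ len] nb by (simp add: obg_gt_def)
  ultimately show ?thesis using assms by simp
qed

lemma constrB:
  assumes k1: "k \<ge> 1" and m1: "m \<ge> 1" and kp: "k*m*m \<le> p" and kn: "2*k*k*m \<le> n"
  shows "k*k*m*m \<le> beta_star n p \<infinity>"
proof -
  define K where "K = k*m"
  define L where "L = K*m"
  define line where "line a b = map (\<lambda>x. prod_encode (x, a*x+b)) [1..<k+1]" for a b
  define Ps where "Ps = map (\<lambda>j. if j < L then line (j div K + 1) (j mod K + 1) else []) [0..<p]"
  have K0: "K > 0" using k1 m1 unfolding K_def by simp
  have Lp: "L \<le> p" using kp unfolding L_def K_def by simp
  have len: "length Ps = p" unfolding Ps_def by simp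
  have nth: "\<And>j. j < p \<Longrightarrow> Ps ! j = (if j < L then line (j div K + 1) (j mod K + 1) else [])"
    unfolding Ps_def by simp
  have precL: "\<And>j u w. j < p \<Longrightarrow> prec (Ps!j) u w \<Longrightarrow> j < L \<and> (\<exists>x1 x2. 1 \<le> x1 \<and> x1 < x2 \<and> x2 \<le> k \<and>
      u = prod_encode (x1, (j div K + 1)*x1 + (j mod K + 1)) \<and> w = prod_encode (x2, (j div K + 1)*x2 + (j mod K + 1)))"
  proof -
    fix j u w assume j: "j < p" and h: "prec (Ps!j) u w"
    have jL: "j < L" using h nth[OF j] prec_Nil by (cases "j < L") auto
    hence "prec (line (j div K + 1) (j mod K + 1)) u w" using h nth[OF j] by simp
    from prec_map_upt[OF this[unfolded line_def]] jL show "?thesis j u w" by auto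
  qed
  have nb: "\<And>b vs is. \<not> ordered_bridge Ps b vs is"
  proof (rule no_bridge[where X="\<lambda>u. int (fst (prod_decode u))" and Y="\<lambda>u. int (snd (prod_decode u))"
        and s="\<lambda>j. int (j div K + 1)"])
    fix j u w assume jl: "j < length Ps" and hp: "prec (Ps!j) u w"
    have jp: "j < p" using jl len by simp
    obtain x1 x2 where x: "1 \<le> x1" "x1 < x2" "x2 \<le> k"
      "u = prod_encode (x1, (j div K + 1)*x1 + (j mod K + 1))" "w = prod_encode (x2, (j div K + 1)*x2 + (j mod K + 1))"
      using precL[OF jp hp] by blast
    show "int (fst (prod_decode u)) < int (fst (prod_decode w)) \<and>
          int (snd (prod_decode w)) - int (snd (prod_decode u)) = int (j div K + 1) * (int (fst (prod_decode w)) - int (fst (prod_decode u)))"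
      using x by (simp add: algebra_simps)
  next
    fix j j' :: nat assume "j \<le> j'"
    thus "int (j div K + 1) \<le> int (j' div K + 1)" by (simp add: div_le_mono)
  next
    fix j j' u v w assume jl: "j < length Ps" "j' < length Ps" and ne: "j \<noteq> j'"
      and eq: "int (j div K + 1) = int (j' div K + 1)" and h1: "prec (Ps!j) u v" and h2: "prec (Ps!j') u w"
    obtain x1 where x1: "u = prod_encode (x1, (j div K + 1)*x1 + (j mod K + 1))"
      using precL[OF _ h1] jl len by auto
    obtain x2 where x2: "u = prod_encode (x2, (j' div K + 1)*x2 + (j' mod K + 1))"
      using precL[OF _ h2] jl len by auto
    have d: "j div K = j' div K" using eq by simp
    have "prod_encode (x1, (j div K + 1)*x1 + (j mod K + 1)) = prod_encode (x2, (j' div K + 1)*x2 + (j' mod K + 1))"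
      by (rule trans[OF x1[symmetric] x2])
    hence "(x1, (j div K + 1)*x1 + (j mod K + 1)) = (x2, (j' div K + 1)*x2 + (j' mod K + 1))"
      by (simp only: prod_encode_eq)
    hence c: "x1 = x2 \<and> (j div K + 1)*x1 + (j mod K + 1) = (j' div K + 1)*x2 + (j' mod K + 1)"
      by (rule prod.inject[THEN iffD1])
    from c have x12: "x1 = x2" by (rule conjunct1)
    from c have e: "(j div K + 1)*x1 + (j mod K + 1) = (j' div K + 1)*x2 + (j' mod K + 1)" by (rule conjunct2)
    have "j mod K = j' mod K" using e d unfolding x12 by simp
    moreover have "j = K * (j div K) + j mod K" "j' = K * (j' div K) + j' mod K" by simp_all
    ultimately have "j = j'" using d by simp
    thus False using ne by simp
  qed
  define G where "G = prod_encode ` ({1..k} \<times> {1..2*k*m})"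
  have fG: "finite G" unfolding G_def by simp
  have cG: "card G \<le> n"
  proof -
    have "card G \<le> card ({1..k} \<times> {1..2*k*m})" unfolding G_def by (rule card_image_le) simp
    also have "\<dots> = k * (2*k*m)" by (simp add: card_cartesian_product)
    finally show ?thesis using kn by (simp add: algebra_simps)
  qed
  obtain V where V: "finite V" "G \<subseteq> V" "card V = n" using extend_set[OF fG cG] by blast
  have ps: "path_system V Ps" unfolding path_system_def
  proof (intro conjI ballI)
    fix \<pi> assume "\<pi> \<in> set Ps"
    then obtain j where j: "j < p" "\<pi> = Ps ! j" using len by (auto simp: in_set_conv_nth)
    show "distinct \<pi>"
    proof (cases "j < L")
      case True
      have "inj_on (\<lambda>x. prod_encode (x, (j div K + 1)*x + (j mod K + 1))) S" for S
        by (auto simp: inj_on_def)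
      thus ?thesis using j True nth unfolding line_def by (simp add: distinct_map)
    qed (use j nth in simp)
    show "set \<pi> \<subseteq> V"
    proof (cases "j < L")
      case True
      have "j < m * K" using True unfolding L_def by (simp add: mult.commute)
      hence "j div K < m" by (rule less_mult_imp_div_less)
      hence a: "j div K + 1 \<le> m" by simp
      have b: "j mod K + 1 \<le> K" using K0 by (simp add: Suc_leI)
      have "set \<pi> \<subseteq> G"
      proof
        fix u assume "u \<in> set \<pi>"
        then obtain x where x: "1 \<le> x" "x \<le> k" "u = prod_encode (x, (j div K + 1)*x + (j mod K + 1))"
          using j True nth unfolding line_def by auto
        have "(j div K + 1)*x \<le> m * k" by (rule mult_le_mono[OF a x(2)])
        hence "(j div K + 1)*x \<le> K" unfolding K_def by (simp add: mult.commute)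
        hence "(j div K + 1)*x + (j mod K + 1) \<le> K + K" using b by (rule add_le_mono)
        moreover have "K + K = 2*k*m" unfolding K_def by simp
        ultimately have "(j div K + 1)*x + (j mod K + 1) \<le> 2*k*m" by simp
        thus "u \<in> G" unfolding G_def using x by auto
      qed
      thus ?thesis using V by auto
    qed (use j nth in simp)
  qed (use V in simp)
  have "ps_size Ps = (\<Sum>j\<in>{0..<p}. if j < L then k else 0)"
  proof -
    have "ps_size Ps = sum_list (map (\<lambda>j. length (if j < L then line (j div K + 1) (j mod K + 1) else [])) [0..<p])"
      unfolding ps_size_def Ps_def by (simp add: comp_def)
    also have "\<dots> = sum_list (map (\<lambda>j. if j < L then k else 0) [0..<p])"
      unfolding line_def by (intro arg_cong[where f=sum_list] map_cong) auto
    also have "\<dots> = (\<Sum>j\<in>{0..<p}. if j < L then k else 0)"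
      by (simp add: sum_set_upt_conv_sum_list_nat[symmetric])
    finally show ?thesis .
  qed
  also have "\<dots> = (\<Sum>j\<in>{0..<L}. k)"
    using Lp by (intro sum.mono_neutral_cong_right) auto
  also have "\<dots> = k*k*m*m" unfolding L_def K_def by simp
  finally have "ps_size Ps = k*k*m*m" .
  moreover have "ps_size Ps \<le> beta_star n p \<infinity>"
    using beta_ge[OF ps V(3) len] nb by (simp add: obg_gt_def)
  ultimately show ?thesis by simp
qed

lemma exists_k:
  fixes P :: "nat \<Rightarrow> bool"
  assumes "P 1" "\<forall>k. P k \<longrightarrow> k \<le> B"
  shows "\<exists>k\<ge>1. P k \<and> \<not> P (Suc k)"
proof (rule ccontr)
  assume h: "\<not> ?thesis"
  have "P (Suc i)" for i
  proof (induction i)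
    case 0 then show ?case using assms by simp
  next
    case (Suc i) then show ?case using h by auto
  qed
  thus False using assms(2) by (metis Suc_n_not_le_n)
qed

lemma cube_le: "(a::nat)^3 \<le> b^3 \<Longrightarrow> a \<le> b"
proof (rule ccontr)
  assume "a^3 \<le> b^3" "\<not> a \<le> b"
  hence "b < a" by simp
  hence "b^3 < a^3" by (rule power_strict_mono) auto
  thus False using \<open>a^3 \<le> b^3\<close> by simp
qed

lemma middle:
  fixes n p :: nat
  assumes n1: "n \<ge> 1" and p1: "p \<ge> 1" and h1: "4*p \<le> n^2" and h2: "4*n \<le> p^2"
  shows "\<exists>k m. k \<ge> 1 \<and> m \<ge> 1 \<and> k*m*m \<le> p \<and> 2*k*k*m \<le> n \<and> (n*p)^2 \<le> 2^20 * (k*m)^6"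
proof -
  have kb: "\<forall>k. 4*p*k^3 \<le> n^2 \<longrightarrow> k \<le> n^2"
  proof (intro allI impI)
    fix k :: nat assume a: "4*p*k^3 \<le> n^2"
    have "k \<le> k^3" by (cases k) (auto intro: self_le_power)
    also have "\<dots> \<le> 4*p*k^3" using p1 by simp
    finally show "k \<le> n^2" using a by simp
  qed
  obtain k where k: "k \<ge> 1" "4*p*k^3 \<le> n^2" "\<not> 4*p*(Suc k)^3 \<le> n^2"
    using exists_k[of "\<lambda>k. 4*p*k^3 \<le> n^2", OF _ kb] h1 by auto
  have mb: "\<forall>m. 4*n*m^3 \<le> p^2 \<longrightarrow> m \<le> p^2"
  proof (intro allI impI)
    fix m :: nat assume a: "4*n*m^3 \<le> p^2"
    have "m \<le> m^3" by (cases m) (auto intro: self_le_power)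
    also have "\<dots> \<le> 4*n*m^3" using n1 by simp
    finally show "m \<le> p^2" using a by simp
  qed
  obtain m where m: "m \<ge> 1" "4*n*m^3 \<le> p^2" "\<not> 4*n*(Suc m)^3 \<le> p^2"
    using exists_k[of "\<lambda>m. 4*n*m^3 \<le> p^2", OF _ mb] h2 by auto
  have A2: "n^2 < 32*p*k^3"
  proof -
    have "Suc k \<le> 2*k" using k(1) by simp
    hence "(Suc k)^3 \<le> (2*k)^3" by (rule power_mono) simp
    hence "4*p*(Suc k)^3 \<le> 4*p*(2*k)^3" by simp
    moreover have "4*p*(2*k)^3 = 32*p*k^3" by (simp add: power_mult_distrib)
    ultimately show ?thesis using k(3) by linarith
  qed
  have B2: "p^2 < 32*n*m^3"
  proof -
    have "Suc m \<le> 2*m" using m(1) by simp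
    hence "(Suc m)^3 \<le> (2*m)^3" by (rule power_mono) simp
    hence "4*n*(Suc m)^3 \<le> 4*n*(2*m)^3" by simp
    moreover have "4*n*(2*m)^3 = 32*n*m^3" by (simp add: power_mult_distrib)
    ultimately show ?thesis using m(3) by linarith
  qed
  have g1: "4*k*k*m \<le> n"
  proof -
    have "(4*p*k^3)^2 \<le> (n^2)^2" using k(2) by (rule power_mono) simp
    hence le: "(4*p*k^3)^2 * (4*n*m^3) \<le> (n^2)^2 * p^2" using m(2) by (rule mult_le_mono)
    have e1: "(4*p*k^3)^2 * (4*n*m^3) = (p^2*n) * (4*k*k*m)^3" by (simp add: algebra_simps power_mult_distrib power2_eq_square power3_eq_cube)
    have e2: "(n^2)^2 * p^2 = (p^2*n) * n^3" by (simp add: algebra_simps power2_eq_square power3_eq_cube)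
    have cc: "(p^2*n) * (4*k*k*m)^3 \<le> (p^2*n) * n^3" using le unfolding e1 e2 .
    have pos: "p^2*n > 0" using n1 p1 by simp
    from cc pos have "(4*k*k*m)^3 \<le> n^3" by (rule mult_left_le_imp_le)
    thus ?thesis by (rule cube_le)
  qed
  have g2: "4*k*m*m \<le> p"
  proof -
    have "(4*n*m^3)^2 \<le> (p^2)^2" using m(2) by (rule power_mono) simp
    hence le: "(4*n*m^3)^2 * (4*p*k^3) \<le> (p^2)^2 * n^2" using k(2) by (rule mult_le_mono)
    have e1: "(4*n*m^3)^2 * (4*p*k^3) = (n^2*p) * (4*k*m*m)^3" by (simp add: algebra_simps power_mult_distrib power2_eq_square power3_eq_cube)
    have e2: "(p^2)^2 * n^2 = (n^2*p) * p^3" by (simp add: algebra_simps power2_eq_square power3_eq_cube)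
    have cc: "(n^2*p) * (4*k*m*m)^3 \<le> (n^2*p) * p^3" using le unfolding e1 e2 .
    have pos: "n^2*p > 0" using n1 p1 by simp
    from cc pos have "(4*k*m*m)^3 \<le> p^3" by (rule mult_left_le_imp_le)
    thus ?thesis by (rule cube_le)
  qed
  have g3: "n*p < 1024*(k*m)^3"
  proof -
    have "n^2 * p^2 < (32*p*k^3) * (32*n*m^3)" using A2 B2 by (rule mult_strict_mono) (use p1 k(1) in auto)
    moreover have "(32*p*k^3) * (32*n*m^3) = (n*p) * (1024*(k*m)^3)" by (simp add: algebra_simps power_mult_distrib)
    moreover have "n^2 * p^2 = (n*p)*(n*p)" by (simp add: algebra_simps power2_eq_square)
    ultimately have "(n*p)*(n*p) < (n*p) * (1024*(k*m)^3)" by simp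
    thus ?thesis by simp
  qed
  have "(n*p)^2 \<le> (1024*(k*m)^3)^2" using g3 by (intro power_mono) auto
  also have "\<dots> = 2^20 * (k*m)^6" by (simp add: power_mult_distrib flip: power_mult)
  finally have g4: "(n*p)^2 \<le> 2^20 * (k*m)^6" .
  show ?thesis using k(1) m(1) g1 g2 g4 by (intro exI[of _ k] exI[of _ m]) auto
qed

lemma N_cube:
  fixes n p :: nat
  assumes "n \<ge> 1" "p \<ge> 1"
  shows "(real n powr (2/3) * real p powr (2/3))^3 = (real n * real p)^2"
proof -
  have pos: "real n * real p > 0" using assms by simp
  have "real n powr (2/3) * real p powr (2/3) = (real n * real p) powr (2/3)"
    by (simp add: powr_mult)
  also have "(\<dots>)^3 = (real n * real p) powr (real 3 * (2/3))"
    using assms by (subst powr_power) auto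
  also have "\<dots> = (real n * real p) powr (real 2)" by simp
  also have "\<dots> = (real n * real p)^2" using pos by (rule powr_realpow)
  finally show ?thesis .
qed

lemma cube_le_real: "(x::real)^3 \<le> y^3 \<Longrightarrow> y \<ge> 0 \<Longrightarrow> x \<le> y"
proof (rule ccontr)
  assume "x^3 \<le> y^3" "y \<ge> 0" "\<not> x \<le> y"
  hence "y < x" by simp
  hence "y^3 < x^3" using \<open>y \<ge> 0\<close> by (intro power_strict_mono) auto
  thus False using \<open>x^3 \<le> y^3\<close> by simp
qed

lemma final_real:
  fixes N B x y :: real
  assumes "N \<ge> 0" "x + y - 1 \<le> B" "x + y \<ge> 2" "N \<le> 2 * (x + y) \<or> N \<le> 128 * B"
  shows "1/130 * (N + x + y) \<le> B"
  using assms(4)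
proof
  assume "N \<le> 2 * (x + y)" hence "N + x + y \<le> 130 * B" using assms(1-3) by (smt (verit))
  thus ?thesis by simp
next
  assume "N \<le> 128 * B" hence "N + x + y \<le> 130 * B" using assms(1-3) by (smt (verit))
  thus ?thesis by simp
qed

lemma mid_real:
  fixes N K :: real
  assumes "N \<ge> 0" "K \<ge> 0" "N^3 \<le> 2^20 * K^6"
  shows "N \<le> 128 * K^2"
proof -
  have e: "(128 * K^2)^3 = 2^21 * K^6" by (simp add: power_mult_distrib flip: power_mult)
  have "K^6 \<ge> 0" using assms(2) by simp
  hence "(2::real)^20 * K^6 \<le> 2^21 * K^6" by (intro mult_right_mono) auto
  hence "N^3 \<le> 2^21 * K^6" using assms(3) by linarith
  hence "N^3 \<le> (128 * K^2)^3" using e by simp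
  thus ?thesis by (rule cube_le_real) (use assms in simp)
qed

lemma out_real:
  fixes N x y :: real
  assumes "N \<ge> 0" "x > 0" "y > 0" "N^3 = (x*y)^2" "x^2 < 4*y"
  shows "N \<le> 2 * y"
proof -
  have "N^3 = x^2 * y^2" using assms(4) by (simp add: power_mult_distrib)
  also have "x^2 * y^2 < (4*y) * y^2" using assms(3,5) by (intro mult_strict_right_mono) auto
  also have "(4*y) * y^2 \<le> (2*y)^3" using assms(3) by (simp add: power3_eq_cube power2_eq_square)
  finally have "N^3 \<le> (2*y)^3" by simp
  thus ?thesis by (rule cube_le_real) (use assms in simp)
qed

theorem theorem3p19:
  shows "\<exists>c>0. \<forall>n p::nat. n \<ge> 1 \<longrightarrow> p \<ge> 1 \<longrightarrow>
           real (beta_star n p \<infinity>) \<ge> c * (real n powr (2/3) * real p powr (2/3) + real n + real p)"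
proof (rule exI[of _ "1/130"], rule conjI, simp, intro allI impI)
  fix n p :: nat assume n1: "n \<ge> 1" and p1: "p \<ge> 1"
  define N where "N = real n powr (2/3) * real p powr (2/3)"
  define B where "B = real (beta_star n p \<infinity>)"
  have N3: "N^3 = (real n * real p)^2" unfolding N_def using N_cube[OF n1 p1] .
  have N0: "N \<ge> 0" unfolding N_def by simp
  have BA0: "real (n+p-1) \<le> B" using constrA[OF n1 p1] unfolding B_def by (simp only: of_nat_le_iff)
  have "real (n+p-1) = real n + real p - 1" using n1 by (simp add: of_nat_diff)
  hence BA: "real n + real p - 1 \<le> B" using BA0 by simp
  have xy2: "real n + real p \<ge> 2" using n1 p1 by simp
  have cs: "(4*p \<le> n^2 \<and> 4*n \<le> p^2) \<or> n^2 < 4*p \<or> p^2 < 4*n" by auto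
  have "N \<le> 2 * (real n + real p) \<or> N \<le> 128 * B"
  proof -
    { assume T: "4*p \<le> n^2 \<and> 4*n \<le> p^2"
      then obtain k m where km: "k \<ge> 1" "m \<ge> 1" "k*m*m \<le> p" "2*k*k*m \<le> n" "(n*p)^2 \<le> 2^20 * (k*m)^6"
        using middle[OF n1 p1] by blast
      have "k*k*m*m \<le> beta_star n p \<infinity>" using constrB[OF km(1-4)] .
      hence "real (k*k*m*m) \<le> B" unfolding B_def by (simp only: of_nat_le_iff)
      moreover have "real (k*k*m*m) = (real (k*m))^2" by (simp add: power2_eq_square)
      ultimately have Bk: "(real (k*m))^2 \<le> B" by simp
      have c1: "real ((n*p)^2) \<le> real (2^20 * (k*m)^6)" using km(5) by (simp only: of_nat_le_iff)
      have c2: "real ((n*p)^2) = (real n * real p)^2" by simp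
      have c3: "real (2^20 * (k*m)^6) = 2^20 * (real (k*m))^6" by simp
      have "N^3 \<le> 2^20 * (real (k*m))^6" using c1 unfolding c2 c3 N3 .
      hence "N \<le> 128 * (real (k*m))^2" by (intro mid_real N0) simp
      hence ?thesis using Bk by simp }
    moreover
    { assume a: "n^2 < 4*p"
      hence "real (n^2) < real (4*p)" by (simp only: of_nat_less_iff)
      hence "(real n)^2 < 4 * real p" by simp
      hence "N \<le> 2 * real p" using N0 N3 n1 p1 by (intro out_real[of N "real n" "real p"]) auto
      hence ?thesis by simp }
    moreover
    { assume a: "p^2 < 4*n"
      hence "real (p^2) < real (4*n)" by (simp only: of_nat_less_iff)
      hence "(real p)^2 < 4 * real n" by simp
      moreover have "N^3 = (real p * real n)^2" using N3 by (simp add: mult.commute)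
      ultimately have "N \<le> 2 * real n" using N0 n1 p1 by (intro out_real[of N "real p" "real n"]) auto
      hence ?thesis by simp }
    ultimately show ?thesis using cs by blast
  qed
  from final_real[OF N0 BA xy2 this]
  show "1/130 * (real n powr (2/3) * real p powr (2/3) + real n + real p) \<le> real (beta_star n p \<infinity>)"
    unfolding N_def B_def .
qed

end
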